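(* Let $V$ be a Hermitian positive definite $m\times m$ matrix such that $\hat L^\dagger(\mathbf{k})V\hat L(\mathbf{k})$ is nonsingular for every nonzero $\mathbf{k}\in\mathbb{R}^d$, set $\Gamma(\mathbf{k})=\hat L(\mathbf{k})\big(\hat L^\dagger(\mathbf{k})V\hat L(\mathbf{k})\big)^{-1}\hat L^\dagger(\mathbf{k})$ and $\Delta(\mathbf{k})=V-V\Gamma(\mathbf{k})V$. Let $\mathbf{w}\in\mathbb{C}^m$ and suppose $\beta=\sup_{\mathbf{k}\in\mathbb{R}^d,\mathbf{k}\neq0}\mathbf{w}\cdot\Delta(\mathbf{k})\mathbf{w}$ is finite and positive. Let $T=V^{-1}-\mathbf{w}\mathbf{w}^\dagger/\beta$ and $g(\mathbf{J})=\mathbf{J}\cdot T\mathbf{J}$. Let $\mathbf{k}\neq0$ satisfy $\mathbf{w}\cdot\Delta(\mathbf{k})\mathbf{w}=\beta$. Then the set of $\mathbf{H}\in\mathcal{J}_{\mathbf{k}}$ with $g(\mathbf{H})=0$ consists exactly of the vectors $\mathbf{H}=b\Delta(\mathbf{k})\mathbf{w}$ with $b\in\mathbb{C}$, and for such $\mathbf{H}$ one has $T\mathbf{H}=-b\Gamma(\mathbf{k})V\mathbf{w}=\hat L(\mathbf{k})\mathbf{G}$ with $\mathbf{G}=-b\big(\hat L^\dagger(\mathbf{k})V\hat L(\mathbf{k})\big)^{-1}\hat L^\dagger(\mathbf{k})V\mathbf{w}$.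
   Context: Fix integers $d,\ell,m,t\ge 1$ and complex constants $A_{rq}$, $A^{a_1\ldots a_h}_{rqh}$ ($1\le r\le m$, $1\le q\le \ell$, $1\le h\le t$, $1\le a_i\le d$). For $\mathbf{k}\in\mathbb{R}^d$, $\hat L(\mathbf{k})$ is the $m\times\ell$ matrix with entries $A_{rq}+\sum_{h=1}^t\sum_{a_1,\ldots,a_h=1}^d i^hA^{a_1\ldots a_h}_{rqh}k_{a_1}\cdots k_{a_h}$, $\hat L^\dagger(\mathbf{k})$ is its conjugate transpose, and $\mathcal{J}_{\mathbf{k}}\subset\mathbb{C}^m$ is the null space of $\hat L^\dagger(\mathbf{k})$; $\mathbf{w}^\dagger$ is the conjugate transpose of $\mathbf{w}$. For $\mathbf{a},\mathbf{b}\in\mathbb{C}^m$, $\mathbf{a}\cdot\mathbf{b}=\sum_r\overline{a_r}b_r$. *)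

theory Defs
  imports "Jordan_Normal_Form.Schur_Decomposition" "Jordan_Normal_Form.Matrix_Kernel"
    "Jordan_Normal_Form.Gauss_Jordan_Elimination"
begin

text \<open>Indices are 0-based: rows r < m, columns q < l, directions a < d, orders h in 1..t.
  A0 r q stands for A_{rq}; Ah r q h as stands for A^{a_1...a_h}_{rqh} with as = [a_1,...,a_h].\<close>

definition Lhat :: "(nat \<Rightarrow> nat \<Rightarrow> complex) \<Rightarrow> (nat \<Rightarrow> nat \<Rightarrow> nat \<Rightarrow> nat list \<Rightarrow> complex)
    \<Rightarrow> nat \<Rightarrow> nat \<Rightarrow> nat \<Rightarrow> nat \<Rightarrow> real vec \<Rightarrow> complex mat" where
  "Lhat A0 Ah d t m l k = mat m l (\<lambda>(r, q). A0 r q +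
     (\<Sum>h\<in>{1..t}. \<Sum>as\<in>{as. set as \<subseteq> {..<d} \<and> length as = h}.
        \<i> ^ h * Ah r q h as * (\<Prod>a\<leftarrow>as. complex_of_real (k $ a))))"

definition cdot :: "complex vec \<Rightarrow> complex vec \<Rightarrow> complex" where
  "cdot a b = (\<Sum>r<dim_vec a. cnj (a $ r) * b $ r)"

definition minv :: "complex mat \<Rightarrow> complex mat" where
  "minv A = the (mat_inverse A)"

definition herm_pos_def :: "nat \<Rightarrow> complex mat \<Rightarrow> bool" where
  "herm_pos_def m V \<longleftrightarrow> V \<in> carrier_mat m m \<and> mat_adjoint V = V \<and>
     (\<forall>x\<in>carrier_vec m. x \<noteq> 0\<^sub>v m \<longrightarrow> Re (cdot x (V *\<^sub>v x)) > 0)"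

definition outer :: "complex vec \<Rightarrow> complex mat" where
  "outer w = mat (dim_vec w) (dim_vec w) (\<lambda>(i, j). w $ i * cnj (w $ j))"

end

theory Submission imports Defs "Jordan_Normal_Form.Determinant" begin

lemma adj_carrier: "A \<in> carrier_mat n p \<Longrightarrow> mat_adjoint A \<in> carrier_mat p n"
  unfolding mat_adjoint_def by auto

lemma adj_index: "A \<in> carrier_mat n p \<Longrightarrow> i < p \<Longrightarrow> j < n \<Longrightarrow> mat_adjoint A $$ (i,j) = cnj (A $$ (j,i))"
  unfolding mat_adjoint_def by (auto simp: mat_of_rows_def)

lemma cdot_adj:
  assumes A: "A \<in> carrier_mat n p" and x: "x \<in> carrier_vec n" and y: "y \<in> carrier_vec p"
  shows "cdot x (A *\<^sub>v y) = cdot (mat_adjoint A *\<^sub>v x) y"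
proof -
  have "cdot x (A *\<^sub>v y) = (\<Sum>r<n. cnj (x $ r) * (\<Sum>j<p. A $$ (r,j) * y $ j))"
    using A x y unfolding cdot_def by (auto simp: scalar_prod_def row_def intro!: sum.cong)
  also have "\<dots> = (\<Sum>r<n. \<Sum>j<p. cnj (x $ r) * A $$ (r,j) * y $ j)"
    by (simp add: sum_distrib_left mult.assoc)
  also have "\<dots> = (\<Sum>j<p. \<Sum>r<n. cnj (x $ r) * A $$ (r,j) * y $ j)"
    by (rule sum.swap)
  also have "\<dots> = (\<Sum>j<p. cnj (\<Sum>r<n. cnj (A $$ (r,j)) * x $ r) * y $ j)"
    by (simp add: sum_distrib_left mult_ac)
  also have "\<dots> = cdot (mat_adjoint A *\<^sub>v x) y"
    using A x y adj_carrier[OF A] unfolding cdot_def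
    by (auto simp: scalar_prod_def row_def adj_index[OF A] intro!: sum.cong)
  finally show ?thesis .
qed

lemma cdot_cnj: "dim_vec x = dim_vec y \<Longrightarrow> cdot y x = cnj (cdot x y)"
  unfolding cdot_def by (simp add: mult.commute)

lemma cdot_add_r: "dim_vec y = dim_vec x \<Longrightarrow> dim_vec z = dim_vec x \<Longrightarrow> cdot x (y + z) = cdot x y + cdot x z"
  unfolding cdot_def by (simp add: algebra_simps sum.distrib)
lemma cdot_minus_r: "dim_vec y = dim_vec x \<Longrightarrow> dim_vec z = dim_vec x \<Longrightarrow> cdot x (y - z) = cdot x y - cdot x z"
  unfolding cdot_def by (simp add: algebra_simps sum_subtractf)
lemma cdot_smult_r: "dim_vec y = dim_vec x \<Longrightarrow> cdot x (a \<cdot>\<^sub>v y) = a * cdot x y"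
  unfolding cdot_def by (simp add: algebra_simps sum_distrib_left)
lemma cdot_smult_l: "cdot (a \<cdot>\<^sub>v x) y = cnj a * cdot x y"
  unfolding cdot_def by (simp add: algebra_simps sum_distrib_left)
lemma cdot_minus_l: "dim_vec y = dim_vec x \<Longrightarrow> cdot (x - y) z = cdot x z - cdot y z"
  unfolding cdot_def by (simp add: algebra_simps sum_subtractf)
lemma cdot_zero_r: "dim_vec x = n \<Longrightarrow> cdot x (0\<^sub>v n) = 0"
  unfolding cdot_def by simp

lemma outer_mult: "w \<in> carrier_vec m \<Longrightarrow> H \<in> carrier_vec m \<Longrightarrow>
   (c \<cdot>\<^sub>m outer w) *\<^sub>v H = (c * cdot w H) \<cdot>\<^sub>v w"
  unfolding outer_def cdot_def
  by (intro eq_vecI) (auto simp: scalar_prod_def row_def sum_distrib_left mult_ac intro!: sum.cong)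

lemma inv_det: assumes A: "A \<in> carrier_mat n n" and d: "det A \<noteq> 0"
  shows "minv A \<in> carrier_mat n n \<and> A * minv A = 1\<^sub>m n \<and> minv A * A = 1\<^sub>m n"
proof -
  have U: "A \<in> Units (ring_mat TYPE(complex) n undefined)" by (rule det_non_zero_imp_unit[OF A d])
  obtain B where B: "mat_inverse A = Some B"
    using mat_inverse(1)[OF A, of undefined] U by (cases "mat_inverse A") auto
  show ?thesis using mat_inverse(2)[OF A B] B unfolding minv_def by auto
qed

lemma invertible_det: assumes A: "(A::complex mat) \<in> carrier_mat n n" and i: "invertible_mat A"
  shows "det A \<noteq> 0"
proof -
  from i obtain B where AB: "A * B = 1\<^sub>m n" and BA: "B * A = 1\<^sub>m (dim_row B)"
    using A unfolding invertible_mat_def inverts_mat_def by auto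
  have "dim_col B = n" using arg_cong[OF AB, of dim_col] by simp
  moreover have "dim_row B = n" using arg_cong[OF BA, of dim_col] A by simp
  ultimately have B: "B \<in> carrier_mat n n" by auto
  have "det A * det B = 1" using arg_cong[OF AB, of det] det_mult[OF A B] by simp
  thus ?thesis by auto
qed

lemma adj_adj: fixes A :: "complex mat" assumes A: "A \<in> carrier_mat n p" shows "mat_adjoint (mat_adjoint A) = A"
proof (rule eq_matI)
  fix i j assume ij: "i < dim_row A" "j < dim_col A"
  have "mat_adjoint (mat_adjoint A) $$ (i,j) = cnj (mat_adjoint A $$ (j,i))"
    using ij A by (intro adj_index[OF adj_carrier[OF A]]) auto
  also have "\<dots> = A $$ (i,j)" using ij A by (subst adj_index[OF A]) auto
  finally show "mat_adjoint (mat_adjoint A) $$ (i,j) = A $$ (i,j)" .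
qed (use adj_carrier[OF adj_carrier[OF A]] A in auto)

theorem mainTheorem5:
  fixes A0 :: "nat \<Rightarrow> nat \<Rightarrow> complex"
    and Ah :: "nat \<Rightarrow> nat \<Rightarrow> nat \<Rightarrow> nat list \<Rightarrow> complex"
    and d t m l :: nat
    and V :: "complex mat" and w :: "complex vec" and k :: "real vec"
    and L Gam Del :: "real vec \<Rightarrow> complex mat" and \<beta> :: real and T :: "complex mat"
    and g :: "complex vec \<Rightarrow> complex"
  assumes dims: "d \<ge> 1" "t \<ge> 1" "m \<ge> 1" "l \<ge> 1"
    and L_def: "L \<equiv> Lhat A0 Ah d t m l"
    and V: "herm_pos_def m V"
    and nonsing: "\<And>k. k \<in> carrier_vec d \<Longrightarrow> k \<noteq> 0\<^sub>v d \<Longrightarrow>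
        invertible_mat (mat_adjoint (L k) * V * L k)"
    and Gam_def: "Gam \<equiv> (\<lambda>k. L k * minv (mat_adjoint (L k) * V * L k) * mat_adjoint (L k))"
    and Del_def: "Del \<equiv> (\<lambda>k. V - V * Gam k * V)"
    and w: "w \<in> carrier_vec m"
    and beta_def: "\<beta> \<equiv> Sup ((\<lambda>k. Re (cdot w (Del k *\<^sub>v w))) ` {k \<in> carrier_vec d. k \<noteq> 0\<^sub>v d})"
    and bdd: "bdd_above ((\<lambda>k. Re (cdot w (Del k *\<^sub>v w))) ` {k \<in> carrier_vec d. k \<noteq> 0\<^sub>v d})"
    and beta_pos: "\<beta> > 0"
    and T_def: "T \<equiv> minv V - (1 / complex_of_real \<beta>) \<cdot>\<^sub>m outer w"
    and g_def: "g \<equiv> (\<lambda>J. cdot J (T *\<^sub>v J))"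
    and k: "k \<in> carrier_vec d" "k \<noteq> 0\<^sub>v d"
    and attain: "cdot w (Del k *\<^sub>v w) = complex_of_real \<beta>"
  shows "{H \<in> mat_kernel (mat_adjoint (L k)). g H = 0} = {b \<cdot>\<^sub>v (Del k *\<^sub>v w) | b. True}
    \<and> (\<forall>b. T *\<^sub>v (b \<cdot>\<^sub>v (Del k *\<^sub>v w)) = (- b) \<cdot>\<^sub>v (Gam k *\<^sub>v (V *\<^sub>v w))
         \<and> T *\<^sub>v (b \<cdot>\<^sub>v (Del k *\<^sub>v w)) = L k *\<^sub>v ((- b) \<cdot>\<^sub>v
              (minv (mat_adjoint (L k) * V * L k) *\<^sub>v (mat_adjoint (L k) *\<^sub>v (V *\<^sub>v w)))))"
proof -
  define Lk where "Lk = L k"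
  define Ad where "Ad = mat_adjoint Lk"
  define M where "M = Ad * V * Lk"
  define Mi where "Mi = minv M"
  define Vi where "Vi = minv V"
  define u where "u = Del k *\<^sub>v w"
  define c where "c = 1 / complex_of_real \<beta>"
  have Lk: "Lk \<in> carrier_mat m l" unfolding Lk_def L_def Lhat_def by simp
  have Ad: "Ad \<in> carrier_mat l m" unfolding Ad_def by (rule adj_carrier[OF Lk])
  have AdAd: "mat_adjoint Ad = Lk" unfolding Ad_def by (rule adj_adj[OF Lk])
  have Vc: "V \<in> carrier_mat m m" and adjV: "mat_adjoint V = V"
    and pd: "\<And>x. x \<in> carrier_vec m \<Longrightarrow> x \<noteq> 0\<^sub>v m \<Longrightarrow> Re (cdot x (V *\<^sub>v x)) > 0"
    using V unfolding herm_pos_def_def by auto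
  have detV: "det V \<noteq> 0"
  proof
    assume "det V = 0"
    then obtain v where v: "v \<in> carrier_vec m" "v \<noteq> 0\<^sub>v m" "V *\<^sub>v v = 0\<^sub>v m"
      using det_0_iff_vec_prod_zero[OF Vc] by auto
    have "cdot v (V *\<^sub>v v) = 0" using v cdot_zero_r[of v m] by simp
    thus False using pd[OF v(1,2)] by simp
  qed
  have Vi: "Vi \<in> carrier_mat m m" "V * Vi = 1\<^sub>m m" "Vi * V = 1\<^sub>m m"
    using inv_det[OF Vc detV] unfolding Vi_def by auto
  have M: "M \<in> carrier_mat l l" unfolding M_def using Ad Vc Lk by auto
  have detM: "det M \<noteq> 0"
    using invertible_det[OF M] nonsing[OF k] unfolding M_def Ad_def Lk_def by auto
  have Mi: "Mi \<in> carrier_mat l l" "M * Mi = 1\<^sub>m l" "Mi * M = 1\<^sub>m l"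
    using inv_det[OF M detM] unfolding Mi_def by auto
  define z where "z = Mi *\<^sub>v (Ad *\<^sub>v (V *\<^sub>v w))"
  have z: "z \<in> carrier_vec l" unfolding z_def using Mi Ad Vc w by auto
  have Gk: "Gam k = Lk * Mi * Ad" unfolding Gam_def Lk_def Mi_def M_def Ad_def by simp
  have GVw: "Gam k *\<^sub>v (V *\<^sub>v w) = Lk *\<^sub>v z"
    unfolding Gk z_def using Lk Mi Ad Vc w by (simp add: assoc_mult_mat_vec[of _ m l _ m])
  have u: "u = V *\<^sub>v w - V *\<^sub>v (Lk *\<^sub>v z)"
  proof -
    have "u = V *\<^sub>v w - (V * Gam k * V) *\<^sub>v w"
      unfolding u_def Del_def Gk using Lk Mi Ad Vc w
      by (subst minus_mult_distrib_mat_vec[of _ m m]) auto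
    also have "(V * Gam k * V) *\<^sub>v w = V *\<^sub>v (Lk *\<^sub>v z)"
      unfolding GVw[symmetric] Gk using Lk Mi Ad Vc w by (auto simp: assoc_mult_mat_vec[of _ m m _ m])
    finally show ?thesis .
  qed
  have uc: "u \<in> carrier_vec m" unfolding u using Vc Lk z w by auto
  have Adu: "Ad *\<^sub>v u = 0\<^sub>v l"
  proof -
    have "Ad *\<^sub>v u = Ad *\<^sub>v (V *\<^sub>v w) - Ad *\<^sub>v (V *\<^sub>v (Lk *\<^sub>v z))"
      unfolding u using Vc Lk z w Ad by (subst mult_minus_distrib_mat_vec[of _ l m]) auto
    also have "Ad *\<^sub>v (V *\<^sub>v (Lk *\<^sub>v z)) = M *\<^sub>v z"
    proof -
      have "M *\<^sub>v z = (Ad * V) *\<^sub>v (Lk *\<^sub>v z)" unfolding M_def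
        using Vc Lk z Ad by (intro assoc_mult_mat_vec[of _ l m]) auto
      also have "\<dots> = Ad *\<^sub>v (V *\<^sub>v (Lk *\<^sub>v z))"
        using Vc Lk z Ad by (intro assoc_mult_mat_vec[of _ l m]) auto
      finally show ?thesis by simp
    qed
    also have "M *\<^sub>v z = Ad *\<^sub>v (V *\<^sub>v w)"
      unfolding z_def using Mi M Ad Vc w
      by (auto simp: assoc_mult_mat_vec[of _ l l _ l, symmetric])
    finally show ?thesis using Ad Vc w by auto
  qed
  have key1: "cdot u (Vi *\<^sub>v H) = cdot w H" if H: "H \<in> carrier_vec m" "Ad *\<^sub>v H = 0\<^sub>v l" for H
  proof -
    have ViH: "Vi *\<^sub>v H \<in> carrier_vec m" using Vi H by auto
    have VViH: "V *\<^sub>v (Vi *\<^sub>v H) = H" using Vi Vc H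
      by (auto simp: assoc_mult_mat_vec[of _ m m _ m, symmetric])
    have 1: "cdot (V *\<^sub>v w) (Vi *\<^sub>v H) = cdot w H"
      using cdot_adj[OF Vc w ViH] VViH adjV by simp
    have 2: "cdot (V *\<^sub>v (Lk *\<^sub>v z)) (Vi *\<^sub>v H) = 0"
    proof -
      have "cdot (V *\<^sub>v (Lk *\<^sub>v z)) (Vi *\<^sub>v H) = cdot (Lk *\<^sub>v z) H"
        using cdot_adj[OF Vc _ ViH, of "Lk *\<^sub>v z"] VViH adjV Lk z by simp
      also have "\<dots> = cdot z (Ad *\<^sub>v H)"
        using cdot_adj[OF Ad z H(1)] AdAd by simp
      also have "\<dots> = 0" using H(2) z cdot_zero_r[of z l] by simp
      finally show ?thesis .
    qed
    show ?thesis unfolding u using cdot_minus_l[of "V *\<^sub>v (Lk *\<^sub>v z)" "V *\<^sub>v w"] 1 2 Vc Lk z w by simp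
  qed
  have ub: "cdot u (Vi *\<^sub>v u) = complex_of_real \<beta>"
    using key1[OF uc Adu] attain unfolding u_def by simp
  have sym: "cdot y (Vi *\<^sub>v x) = cnj (cdot x (Vi *\<^sub>v y))" if "x \<in> carrier_vec m" "y \<in> carrier_vec m" for x y
  proof -
    define a where "a = Vi *\<^sub>v y"
    define b where "b = Vi *\<^sub>v x"
    have a: "a \<in> carrier_vec m" "V *\<^sub>v a = y" unfolding a_def using Vi Vc that
      by (auto simp: assoc_mult_mat_vec[of _ m m _ m, symmetric])
    have b: "b \<in> carrier_vec m" "V *\<^sub>v b = x" unfolding b_def using Vi Vc that
      by (auto simp: assoc_mult_mat_vec[of _ m m _ m, symmetric])
    have "cdot y (Vi *\<^sub>v x) = cdot (V *\<^sub>v a) b" using a b unfolding b_def by simp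
    moreover have "cdot x (Vi *\<^sub>v y) = cdot b (V *\<^sub>v a)"
      using cdot_adj[OF Vc b(1) a(1)] a b adjV unfolding a_def by simp
    ultimately show ?thesis using cdot_cnj[of b "V *\<^sub>v a"] a b Vc that by simp
  qed
  have posd: "x = 0\<^sub>v m" if "x \<in> carrier_vec m" "cdot x (Vi *\<^sub>v x) = 0" for x
  proof (rule ccontr)
    assume nz: "x \<noteq> 0\<^sub>v m"
    define a where "a = Vi *\<^sub>v x"
    have a: "a \<in> carrier_vec m" "V *\<^sub>v a = x" unfolding a_def using Vi Vc that
      by (auto simp: assoc_mult_mat_vec[of _ m m _ m, symmetric])
    have anz: "a \<noteq> 0\<^sub>v m" using a nz Vc by auto
    have "cdot a (V *\<^sub>v a) = cdot x a" using cdot_adj[OF Vc a(1) a(1)] adjV a by simp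
    also have "\<dots> = 0" using that unfolding a_def by simp
    finally show False using pd[OF a(1) anz] by simp
  qed
  have TH: "T *\<^sub>v H = Vi *\<^sub>v H - (c * cdot w H) \<cdot>\<^sub>v w" if "H \<in> carrier_vec m" for H
  proof -
    have O: "outer w \<in> carrier_mat m m" using w by (auto simp: outer_def)
    show "T *\<^sub>v H = Vi *\<^sub>v H - (c * cdot w H) \<cdot>\<^sub>v w"
      unfolding T_def Vi_def[symmetric] c_def[symmetric] using Vi that w O
      by (subst minus_mult_distrib_mat_vec[of _ m m]) (auto simp: outer_mult[OF w])
  qed
  have gH: "g H = cdot H (Vi *\<^sub>v H) - c * cdot w H * cnj (cdot w H)" if "H \<in> carrier_vec m" for H
    unfolding g_def TH[OF that] using that Vi w cdot_cnj[of H w]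
    by (simp add: cdot_minus_r cdot_smult_r)
  have kerI: "H \<in> mat_kernel Ad \<longleftrightarrow> H \<in> carrier_vec m \<and> Ad *\<^sub>v H = 0\<^sub>v l" for H
    unfolding mat_kernel_def using Ad by auto
  have bpos: "complex_of_real \<beta> \<noteq> 0" using beta_pos by simp
  have part1: "{H \<in> mat_kernel Ad. g H = 0} = {b \<cdot>\<^sub>v u | b. True}"
  proof (intro equalityI subsetI)
    fix H assume "H \<in> {H \<in> mat_kernel Ad. g H = 0}"
    hence H: "H \<in> carrier_vec m" "Ad *\<^sub>v H = 0\<^sub>v l" and g0: "g H = 0" using kerI by auto
    define p where "p = cdot w H"
    define b where "b = p / complex_of_real \<beta>"
    define H' where "H' = H - b \<cdot>\<^sub>v u"
    have H': "H' \<in> carrier_vec m" unfolding H'_def using H uc by auto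
    have p: "cdot u (Vi *\<^sub>v H) = p" unfolding p_def by (rule key1[OF H])
    have p': "cdot H (Vi *\<^sub>v u) = cnj p" using sym[OF uc H(1)] p by simp
    have ViH': "Vi *\<^sub>v H' = Vi *\<^sub>v H - b \<cdot>\<^sub>v (Vi *\<^sub>v u)"
      unfolding H'_def using Vi H uc by (simp add: mult_minus_distrib_mat_vec[of _ m m] mult_mat_vec[of _ m m])
    have "cdot H' (Vi *\<^sub>v H') = cdot H (Vi *\<^sub>v H) - b * cnj p - cnj b * p + cnj b * b * complex_of_real \<beta>"
      unfolding ViH' H'_def using Vi H uc p p' ub
      by (simp add: cdot_minus_r cdot_minus_l cdot_smult_r cdot_smult_l mult_mat_vec[OF Vi(1) uc] algebra_simps)
    also have "\<dots> = g H" unfolding gH[OF H(1)] p_def[symmetric] b_def c_def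
      using bpos by (simp add: field_simps)
    finally have "H' = 0\<^sub>v m" using posd[OF H'] g0 by simp
    hence "H = b \<cdot>\<^sub>v u" unfolding H'_def using H(1) uc
    proof (intro eq_vecI)
      fix i assume e: "H - b \<cdot>\<^sub>v u = 0\<^sub>v m" and i: "i < dim_vec (b \<cdot>\<^sub>v u)"
      have "(H - b \<cdot>\<^sub>v u) $ i = 0\<^sub>v m $ i" using e by simp
      thus "H $ i = (b \<cdot>\<^sub>v u) $ i" using i H(1) uc by simp
    qed (use H(1) uc in auto)
    thus "H \<in> {b \<cdot>\<^sub>v u | b. True}" by auto
  next
    fix H assume "H \<in> {b \<cdot>\<^sub>v u | b. True}"
    then obtain b where Hb: "H = b \<cdot>\<^sub>v u" by auto
    have Hc: "H \<in> carrier_vec m" using Hb uc by auto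
    have "Ad *\<^sub>v H = 0\<^sub>v l" unfolding Hb using mult_mat_vec[OF Ad uc] Adu by (auto intro!: eq_vecI)
    moreover have "g H = 0" unfolding gH[OF Hc] unfolding Hb
      using uc Vi ub attain bpos w cdot_smult_r[of u w b] unfolding u_def[symmetric] c_def
      by (simp add: mult_mat_vec[of _ m m] cdot_smult_r cdot_smult_l field_simps)
    ultimately show "H \<in> {H \<in> mat_kernel Ad. g H = 0}" using kerI Hc by auto
  qed
  have Viu: "Vi *\<^sub>v u = w - Lk *\<^sub>v z"
    unfolding u using Vi Vc Lk z w
    by (simp add: mult_minus_distrib_mat_vec[of _ m m] assoc_mult_mat_vec[of _ m m _ m, symmetric])
  have part2: "T *\<^sub>v (b \<cdot>\<^sub>v u) = (- b) \<cdot>\<^sub>v (Lk *\<^sub>v z)" for b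
  proof -
    have "T *\<^sub>v (b \<cdot>\<^sub>v u) = b \<cdot>\<^sub>v (w - Lk *\<^sub>v z) - b \<cdot>\<^sub>v w"
      using TH[of "b \<cdot>\<^sub>v u"] uc Vi Viu attain bpos w cdot_smult_r[of u w b] unfolding u_def[symmetric] c_def
      by (simp add: mult_mat_vec[of _ m m] cdot_smult_r)
    also have "\<dots> = (- b) \<cdot>\<^sub>v (Lk *\<^sub>v z)" using w Lk z
      by (intro eq_vecI) (auto simp: algebra_simps)
    finally show ?thesis .
  qed
  have e1: "minv (mat_adjoint (L k) * V * L k) = Mi" by (simp add: Mi_def M_def Ad_def Lk_def)
  have p3: "L k *\<^sub>v ((- b) \<cdot>\<^sub>v (minv (mat_adjoint (L k) * V * L k) *\<^sub>v (mat_adjoint (L k) *\<^sub>v (V *\<^sub>v w))))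
     = (- b) \<cdot>\<^sub>v (Lk *\<^sub>v z)" for b
  proof -
    have e2: "minv (mat_adjoint Lk * V * Lk) = Mi" by (simp add: Mi_def M_def Ad_def)
    have e3: "Mi *\<^sub>v (mat_adjoint Lk *\<^sub>v (V *\<^sub>v w)) = z" by (simp add: z_def Ad_def)
    show ?thesis unfolding Lk_def[symmetric] e2 e3 by (rule mult_mat_vec[OF Lk z])
  qed
  have p1: "{H \<in> mat_kernel (mat_adjoint (L k)). g H = 0} = {b \<cdot>\<^sub>v (Del k *\<^sub>v w) | b. True}"
    using part1 unfolding Ad_def Lk_def u_def .
  show ?thesis using p1 p3 part2 GVw unfolding u_def by simp
qed

end
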